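(* Let $\kappa$ be an infinite cardinal of uncountable cofinality $\mathrm{cf}(\kappa)$. If a Banach space $X$ of density character $\kappa$ contains an isomorphic copy of $c_0(\kappa)$, then $X$ admits an equivalent norm for which it is $\mathrm{SQ}_{<\mathrm{cf}(\kappa)}$.
   Context: For a cardinal $\mu$, a Banach space $Z$ is $\mathrm{SQ}_{<\mu}$ if for every set $A\subset S_Z$ with $|A|<\mu$ there exists $y\in S_Z$ with $\|x\pm y\|\le 1$ for all $x\in A$. *)

theory Defs
  imports "HOL-Analysis.Analysis"
begin

text \<open>Cardinals are represented as cardinalities of sets; an infinite cardinal kappa is
  represented by a type 'k with UNIV::'k set of cardinality kappa, together with a
  cardinal (initial) well-order r on 'k, which plays the role of the initial ordinal kappa.\<close>

definition cofinal_in :: "'k rel \<Rightarrow> 'k set \<Rightarrow> bool" where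
  "cofinal_in r C \<longleftrightarrow> (\<forall>k. \<exists>c\<in>C. (k, c) \<in> r)"

text \<open>card A < cf(kappa): A is strictly smaller than every cofinal subset of kappa
  (cf(kappa) is the least cardinality of a cofinal subset).\<close>
definition card_less_cf :: "'b set \<Rightarrow> 'k rel \<Rightarrow> bool" where
  "card_less_cf A r \<longleftrightarrow> (\<forall>C. cofinal_in r C \<longrightarrow> ordLess2 (card_of A) (card_of C))"

definition uncountable_cf :: "'k rel \<Rightarrow> bool" where
  "uncountable_cf r \<longleftrightarrow> (\<forall>C. cofinal_in r C \<longrightarrow> \<not> countable C)"

definition density_char_eq :: "'a::metric_space itself \<Rightarrow> 'k set \<Rightarrow> bool" where
  "density_char_eq _ K \<longleftrightarrow>
     (\<exists>D::'a set. closure D = UNIV \<and> ordIso2 (card_of D) (card_of K)) \<and>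
     (\<forall>D::'a set. closure D = UNIV \<longrightarrow> ordLeq2 (card_of K) (card_of D))"

definition c0 :: "('k \<Rightarrow> real) set" where
  "c0 = {f. \<forall>e>0. finite {k. e \<le> \<bar>f k\<bar>}}"

definition supnorm :: "('k \<Rightarrow> real) \<Rightarrow> real" where
  "supnorm f = (SUP k. \<bar>f k\<bar>)"

definition contains_c0 :: "'a::real_normed_vector itself \<Rightarrow> 'k set \<Rightarrow> bool" where
  "contains_c0 _ K \<longleftrightarrow> (\<exists>T :: ('k \<Rightarrow> real) \<Rightarrow> 'a. \<exists>m M. 0 < m \<and>
     (\<forall>f\<in>c0. \<forall>g\<in>c0. T (\<lambda>k. f k + g k) = T f + T g) \<and>
     (\<forall>f\<in>c0. \<forall>a. T (\<lambda>k. a * f k) = a *\<^sub>R T f) \<and>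
     (\<forall>f\<in>c0. m * supnorm f \<le> norm (T f) \<and> norm (T f) \<le> M * supnorm f))"

definition equiv_norm :: "('a::real_normed_vector \<Rightarrow> real) \<Rightarrow> bool" where
  "equiv_norm N \<longleftrightarrow>
     (\<forall>x. 0 \<le> N x) \<and> (\<forall>x. N x = 0 \<longleftrightarrow> x = 0) \<and>
     (\<forall>x y. N (x + y) \<le> N x + N y) \<and> (\<forall>a x. N (a *\<^sub>R x) = \<bar>a\<bar> * N x) \<and>
     (\<exists>m M. 0 < m \<and> (\<forall>x. m * norm x \<le> N x \<and> N x \<le> M * norm x))"

definition SQ_less_cf :: "('a::real_normed_vector \<Rightarrow> real) \<Rightarrow> 'k rel \<Rightarrow> bool" where
  "SQ_less_cf N r \<longleftrightarrow>
     (\<forall>A. A \<subseteq> {x. N x = 1} \<longrightarrow> card_less_cf A r \<longrightarrow>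
        (\<exists>y. N y = 1 \<and> (\<forall>x\<in>A. N (x + y) \<le> 1 \<and> N (x - y) \<le> 1)))"

end

theory Submission
  imports Defs "HOL-Library.Countable_Set_Type"
begin

lemma c0_add: "f \<in> c0 \<Longrightarrow> g \<in> c0 \<Longrightarrow> (\<lambda>k. f k + g k) \<in> c0"
proof -
  assume f: "f \<in> c0" and g: "g \<in> c0"
  show ?thesis unfolding c0_def
  proof (intro CollectI allI impI)
    fix e :: real assume e: "e > 0"
    have "{k. e \<le> \<bar>f k + g k\<bar>} \<subseteq> {k. e/2 \<le> \<bar>f k\<bar>} \<union> {k. e/2 \<le> \<bar>g k\<bar>}" by auto
    moreover have "finite {k. e/2 \<le> \<bar>f k\<bar>}" "finite {k. e/2 \<le> \<bar>g k\<bar>}"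
      using f g e half_gt_zero unfolding c0_def mem_Collect_eq by blast+
    ultimately show "finite {k. e \<le> \<bar>f k + g k\<bar>}" by (meson finite_Un finite_subset)
  qed
qed

lemma c0_scale: "f \<in> c0 \<Longrightarrow> (\<lambda>k. a * f k) \<in> c0"
proof -
  assume f: "f \<in> c0"
  show ?thesis unfolding c0_def
  proof (intro CollectI allI impI)
    fix e :: real assume e: "e > 0"
    show "finite {k. e \<le> \<bar>a * f k\<bar>}"
    proof (cases "a = 0")
      case True then show ?thesis using e by simp
    next
      case False
      have "{k. e \<le> \<bar>a * f k\<bar>} \<subseteq> {k. e/\<bar>a\<bar> \<le> \<bar>f k\<bar>}"
        using False by (auto simp: abs_mult pos_divide_le_eq mult.commute)
      moreover have "finite {k. e/\<bar>a\<bar> \<le> \<bar>f k\<bar>}" using f e False unfolding c0_def by auto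
      ultimately show ?thesis by (rule finite_subset)
    qed
  qed
qed

lemma c0_diff: "f \<in> c0 \<Longrightarrow> g \<in> c0 \<Longrightarrow> (\<lambda>k. f k - g k) \<in> c0"
  using c0_add[of f "\<lambda>k. (-1) * g k"] c0_scale[of g "-1"] by simp

lemma c0_delta: "(\<lambda>k. if k = a then 1 else 0) \<in> c0"
  unfolding c0_def
proof (intro CollectI allI impI)
  fix e :: real assume "e > 0"
  then have "{k. e \<le> \<bar>(if k = a then 1 else 0)::real\<bar>} \<subseteq> {a}" by auto
  then show "finite {k. e \<le> \<bar>(if k = a then 1 else 0)::real\<bar>}" by (rule finite_subset) simp
qed

lemma c0_zero: "(\<lambda>k. 0) \<in> c0" unfolding c0_def by simp

lemma c0_bdd: assumes "f \<in> c0" shows "bdd_above (range (\<lambda>k. \<bar>f k\<bar>))"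
proof -
  let ?F = "{k. 1 \<le> \<bar>f k\<bar>}"
  have fin: "finite ?F" using assms unfolding c0_def by auto
  have "\<bar>f k\<bar> \<le> 1 + (\<Sum>j\<in>?F. \<bar>f j\<bar>)" for k
  proof (cases "k \<in> ?F")
    case True
    then have "\<bar>f k\<bar> \<le> (\<Sum>j\<in>?F. \<bar>f j\<bar>)" using fin by (intro member_le_sum) auto
    then show ?thesis by simp
  next
    case False
    then have "\<bar>f k\<bar> \<le> 1" by simp
    moreover have "0 \<le> (\<Sum>j\<in>?F. \<bar>f j\<bar>)" by (simp add: sum_nonneg)
    ultimately show ?thesis by linarith
  qed
  then show ?thesis by (intro bdd_aboveI2) 
qed

lemma c0_le_supnorm: "f \<in> c0 \<Longrightarrow> \<bar>f k\<bar> \<le> supnorm f"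
  unfolding supnorm_def using c0_bdd by (intro cSUP_upper) auto

lemma supnorm_le: "(\<And>k. \<bar>f k\<bar> \<le> B) \<Longrightarrow> supnorm f \<le> B"
  unfolding supnorm_def by (intro cSUP_least) auto

lemma infdist_ge_intro: "A \<noteq> {} \<Longrightarrow> (\<And>a. a \<in> A \<Longrightarrow> e \<le> dist x a) \<Longrightarrow> e \<le> infdist x A"
  by (simp add: infdist_notempty cINF_greatest)

lemma infdist_lessE: "A \<noteq> {} \<Longrightarrow> infdist x A < e \<Longrightarrow> \<exists>a\<in>A. dist x a < e"
  by (simp add: infdist_notempty cINF_less_iff)

context
  fixes S :: "'a::real_normed_vector set"
  assumes S: "subspace S"
begin

lemma S_ne: "S \<noteq> {}" using S subspace_0 by blast

lemma infdist_add_le: "infdist (x + y) S \<le> infdist x S + infdist y S"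
proof (rule field_le_epsilon)
  fix e :: real assume e: "e > 0"
  obtain a where a: "a \<in> S" "dist x a < infdist x S + e/2"
    using infdist_lessE[OF S_ne, of x "infdist x S + e/2"] e by auto
  obtain b where b: "b \<in> S" "dist y b < infdist y S + e/2"
    using infdist_lessE[OF S_ne, of y "infdist y S + e/2"] e by auto
  have "a + b \<in> S" using S a b by (simp add: subspace_add)
  then have "infdist (x + y) S \<le> dist (x + y) (a + b)" by (rule infdist_le)
  also have "\<dots> \<le> dist x a + dist y b"
    by (simp add: dist_norm) (metis add_diff_add norm_triangle_ineq)
  finally show "infdist (x + y) S \<le> infdist x S + infdist y S + e" using a b by simp
qed

lemma infdist_scale_le: "infdist (c *\<^sub>R x) S \<le> \<bar>c\<bar> * infdist x S"
proof (cases "c = 0")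
  case True then show ?thesis using infdist_zero[OF subspace_0[OF S]] by simp
next
  case False
  show ?thesis
  proof (rule field_le_epsilon)
    fix e :: real assume e: "e > 0"
    obtain a where a: "a \<in> S" "dist x a < infdist x S + e/\<bar>c\<bar>"
      using infdist_lessE[OF S_ne, of x "infdist x S + e/\<bar>c\<bar>"] e False by auto
    have "c *\<^sub>R a \<in> S" using S a by (simp add: subspace_scale)
    then have "infdist (c *\<^sub>R x) S \<le> dist (c *\<^sub>R x) (c *\<^sub>R a)" by (rule infdist_le)
    also have "\<dots> = \<bar>c\<bar> * dist x a" by (simp add: dist_norm flip: scaleR_diff_right)
    also have "\<dots> \<le> \<bar>c\<bar> * (infdist x S + e/\<bar>c\<bar>)" using a False by (intro mult_left_mono) auto
    also have "\<dots> = \<bar>c\<bar> * infdist x S + e" using False by (simp add: field_simps)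
    finally show "infdist (c *\<^sub>R x) S \<le> \<bar>c\<bar> * infdist x S + e" .
  qed
qed

lemma infdist_scale: "infdist (c *\<^sub>R x) S = \<bar>c\<bar> * infdist x S"
proof (cases "c = 0")
  case True then show ?thesis using infdist_zero[OF subspace_0[OF S]] by simp
next
  case False
  have "infdist x S = infdist (inverse c *\<^sub>R (c *\<^sub>R x)) S" using False by simp
  also have "\<dots> \<le> \<bar>inverse c\<bar> * infdist (c *\<^sub>R x) S" by (rule infdist_scale_le)
  finally have "\<bar>c\<bar> * infdist x S \<le> infdist (c *\<^sub>R x) S" using False
    by (simp add: field_simps abs_inverse divide_le_eq)  
  then show ?thesis using infdist_scale_le by (meson antisym)
qed

lemma infdist_minus: "infdist (- x) S = infdist x S"
  using infdist_scale[of "-1" x] by simp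

lemma infdist_add_mem: "w \<in> S \<Longrightarrow> infdist (x + w) S = infdist x S"
proof -
  assume w: "w \<in> S"
  have "-w \<in> S" using S w by (simp add: subspace_neg)
  have "infdist (x + w) S \<le> infdist x S" using infdist_add_le[of x w] w by simp
  moreover have "infdist x S \<le> infdist (x + w) S"
    using infdist_add_le[of "x + w" "-w"] \<open>-w \<in> S\<close> by simp
  ultimately show ?thesis by simp
qed

lemma infdist_le_norm: "infdist x S \<le> norm x"
  using infdist_le[OF subspace_0[OF S], of x] by simp

end

locale emb =
  fixes T :: "('k \<Rightarrow> real) \<Rightarrow> 'a::real_normed_vector" and m M :: real
  assumes m_pos: "0 < m"
    and T_add: "\<forall>f\<in>c0. \<forall>g\<in>c0. T (\<lambda>k. f k + g k) = T f + T g"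
    and T_scale: "\<forall>f\<in>c0. \<forall>a. T (\<lambda>k. a * f k) = a *\<^sub>R T f"
    and T_bnd: "\<forall>f\<in>c0. m * supnorm f \<le> norm (T f) \<and> norm (T f) \<le> M * supnorm f"
begin

definition dl :: "'k \<Rightarrow> 'k \<Rightarrow> real" where "dl a = (\<lambda>k. if k = a then 1 else 0)"
definition e :: "'k \<Rightarrow> 'a" where "e a = T (dl a)"
definition Y :: "'a set" where "Y = T ` c0"
definition Y0 :: "'k \<Rightarrow> 'a set" where "Y0 a = T ` {f\<in>c0. f a = 0}"

lemma dl_c0: "dl a \<in> c0" unfolding dl_def by (rule c0_delta)

lemma T_zero: "T (\<lambda>k. 0) = 0"
proof -
  have "T (\<lambda>k. 0 * 0) = 0 *\<^sub>R T (\<lambda>k. 0)" by (rule T_scale[rule_format, OF c0_zero])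
  then show ?thesis by simp
qed

lemma T_diff: "f \<in> c0 \<Longrightarrow> g \<in> c0 \<Longrightarrow> T (\<lambda>k. f k - g k) = T f - T g"
proof -
  assume f: "f \<in> c0" and g: "g \<in> c0"
  have h: "\<forall>g'\<in>c0. T (\<lambda>k. f k + g' k) = T f + T g'" using T_add f by blast
  have "T (\<lambda>k. f k - g k) = T (\<lambda>k. f k + (-1) * g k)" by simp
  also have "\<dots> = T f + T (\<lambda>k. (-1) * g k)" using h[rule_format, OF c0_scale[OF g, of "-1"]] .
  also have "\<dots> = T f + (-1) *\<^sub>R T g" using T_scale[rule_format, OF g, of "-1"] by (simp only:)
  also have "\<dots> = T f - T g" by simp
  finally show ?thesis .
qed

lemma T_lower: "f \<in> c0 \<Longrightarrow> m * \<bar>f k\<bar> \<le> norm (T f)"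
proof -
  assume f: "f \<in> c0"
  have "m * \<bar>f k\<bar> \<le> m * supnorm f" using c0_le_supnorm[OF f] m_pos by (intro mult_left_mono) auto
  also have "\<dots> \<le> norm (T f)" using T_bnd f by blast
  finally show ?thesis .
qed

lemma M_pos: "0 < M"
proof -
  have "1 \<le> supnorm (dl a)" for a using c0_le_supnorm[OF dl_c0, of a a] by (simp add: dl_def)
  moreover have "m * supnorm (dl a) \<le> M * supnorm (dl a)" for a using T_bnd dl_c0 by (meson order_trans)
  ultimately have s: "m * supnorm (dl undefined) \<le> M * supnorm (dl undefined)" "0 < supnorm (dl undefined)"
    by (auto intro: less_le_trans[OF zero_less_one])
  then have "m \<le> M" by (rule mult_right_le_imp_le)
  then show ?thesis using m_pos by simp
qed

lemma subspace_img: assumes "\<And>f g. f \<in> V \<Longrightarrow> g \<in> V \<Longrightarrow> (\<lambda>k. f k + g k) \<in> V"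
  and "\<And>f a. f \<in> V \<Longrightarrow> (\<lambda>k. a * f k) \<in> V" and "(\<lambda>k. 0) \<in> V" and "V \<subseteq> c0"
  shows "subspace (T ` V)"
  unfolding subspace_def
proof (intro conjI ballI allI)
  show "0 \<in> T ` V" using assms(3) T_zero by force
next
  fix x y assume "x \<in> T ` V" "y \<in> T ` V"
  then obtain f g where "f \<in> V" "g \<in> V" "x = T f" "y = T g" by auto
  moreover have "T (\<lambda>k. f k + g k) = T f + T g" using T_add \<open>f \<in> V\<close> \<open>g \<in> V\<close> assms(4) by blast
  ultimately show "x + y \<in> T ` V" using assms(1) by (metis image_eqI)
next
  fix c :: real and x assume "x \<in> T ` V"
  then obtain f where "f \<in> V" "x = T f" by auto
  moreover have "T (\<lambda>k. c * f k) = c *\<^sub>R T f" using T_scale \<open>f \<in> V\<close> assms(4) by blast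
  ultimately show "c *\<^sub>R x \<in> T ` V" using assms(2) by (metis image_eqI)
qed

lemma subspace_Y: "subspace Y"
  unfolding Y_def
proof (rule subspace_img)
  show "\<And>f g. f \<in> c0 \<Longrightarrow> g \<in> c0 \<Longrightarrow> (\<lambda>k. f k + g k) \<in> c0" by (rule c0_add)
  show "\<And>f a. f \<in> c0 \<Longrightarrow> (\<lambda>k. a * f k) \<in> c0" by (rule c0_scale)
  show "(\<lambda>k. 0) \<in> c0" by (rule c0_zero)
qed simp

lemma subspace_Y0: "subspace (Y0 a)"
  unfolding Y0_def
proof (rule subspace_img)
  show "\<And>f g. f \<in> {f \<in> c0. f a = 0} \<Longrightarrow> g \<in> {f \<in> c0. f a = 0} \<Longrightarrow> (\<lambda>k. f k + g k) \<in> {f \<in> c0. f a = 0}"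
    using c0_add by auto
  show "\<And>f b. f \<in> {f \<in> c0. f a = 0} \<Longrightarrow> (\<lambda>k. b * f k) \<in> {f \<in> c0. f a = 0}"
    using c0_scale by auto
  show "(\<lambda>k. 0) \<in> {f \<in> c0. f a = 0}" using c0_zero by simp
qed auto

lemma e_Y: "e a \<in> Y" unfolding e_def Y_def using dl_c0 by auto

lemma e_Y0: "a \<noteq> b \<Longrightarrow> e a \<in> Y0 b" unfolding e_def Y0_def using dl_c0 by (auto simp: dl_def)

lemma Y0_Y: "Y0 a \<subseteq> Y" unfolding Y0_def Y_def by auto

lemma dist_e_Y0: assumes "w \<in> Y0 a" shows "m \<le> dist (e a) w"
proof -
  obtain f where f: "f \<in> c0" "f a = 0" "w = T f" using assms unfolding Y0_def by auto
  have "m * \<bar>dl a a - f a\<bar> \<le> norm (T (\<lambda>k. dl a k - f k))"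
    using T_lower[OF c0_diff[OF dl_c0 f(1)]] by simp
  then show ?thesis using f T_diff[OF dl_c0 f(1)] by (simp add: dl_def e_def dist_norm)
qed

lemma decomp: assumes f: "f \<in> c0" shows "\<exists>w\<in>Y0 a. T f = f a *\<^sub>R e a + w"
proof -
  let ?g = "\<lambda>k. f k - f a * dl a k"
  have g: "?g \<in> c0" using c0_diff[OF f c0_scale[OF dl_c0]] by simp
  have "?g a = 0" by (simp add: dl_def)
  then have "T ?g \<in> Y0 a" using g unfolding Y0_def by auto
  moreover have "T f = T (\<lambda>k. f a * dl a k) + T ?g"
  proof -
    have "T (\<lambda>k. f a * dl a k + ?g k) = T (\<lambda>k. f a * dl a k) + T ?g"
      by (rule T_add[rule_format, OF c0_scale[OF dl_c0] g])
    then show ?thesis by simp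
  qed
  moreover have "T (\<lambda>k. f a * dl a k) = f a *\<^sub>R e a" unfolding e_def by (rule T_scale[rule_format, OF dl_c0])
  ultimately show ?thesis by auto
qed

end

locale normpart = emb T m M for T :: "('k \<Rightarrow> real) \<Rightarrow> 'a::real_normed_vector" and m M +
  fixes W :: "'k \<Rightarrow> 'a set" and \<delta> :: real
  assumes W_sub: "subspace (W a)" and Y0_W: "Y0 a \<subseteq> W a" and dpos: "0 < \<delta>"
    and W_far: "\<delta> \<le> infdist (e a) (W a)"
begin

definition rho :: "'k \<Rightarrow> 'a \<Rightarrow> real" where
  "rho a x = infdist x (W a) / infdist (e a) (W a)"
definition Srho :: "'a \<Rightarrow> real" where "Srho x = (SUP a. rho a x)"
definition N :: "'a \<Rightarrow> real" where "N x = max (infdist x Y) (Srho x)"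

lemma ie_pos: "0 < infdist (e a) (W a)" using W_far[of a] dpos by linarith

lemma rho_nonneg: "0 \<le> rho a x" unfolding rho_def using ie_pos by (simp add: infdist_nonneg)

lemma rho_le: "rho a x \<le> norm x / \<delta>"
proof -
  have "infdist x (W a) \<le> norm x" by (rule infdist_le_norm[OF W_sub])
  then have "rho a x \<le> norm x / infdist (e a) (W a)" unfolding rho_def using ie_pos[of a]
    by (simp add: divide_right_mono)
  also have "\<dots> \<le> norm x / \<delta>" using W_far dpos by (simp add: frac_le)
  finally show ?thesis .
qed

lemma rho_add: "rho a (x + y) \<le> rho a x + rho a y"
  unfolding rho_def using infdist_add_le[OF W_sub[of a], of x y] ie_pos[of a]
  by (metis add_divide_distrib divide_right_mono less_imp_le)

lemma rho_scale: "rho a (c *\<^sub>R x) = \<bar>c\<bar> * rho a x"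
  unfolding rho_def using infdist_scale[OF W_sub] by simp

lemma rho_minus: "rho a (- x) = rho a x"
  using rho_scale[of a "-1" x] by simp

lemma rho_e_self: "rho a (e a) = 1" unfolding rho_def using ie_pos[of a] by simp

lemma rho_e_other: "a \<noteq> b \<Longrightarrow> rho b (e a) = 0"
  unfolding rho_def using e_Y0 Y0_W by (simp add: subset_iff)

lemma rho_T: assumes "f \<in> c0" shows "rho a (T f) = \<bar>f a\<bar>"
proof -
  obtain w where w: "w \<in> Y0 a" "T f = f a *\<^sub>R e a + w" using decomp[OF assms] by blast
  have "rho a (T f) = rho a (f a *\<^sub>R e a)"
    unfolding rho_def w(2) using infdist_add_mem[OF W_sub[of a], of w] w(1) Y0_W[of a] by auto
  then show ?thesis using rho_scale rho_e_self by simp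
qed

lemma rho_closure: "x \<in> closure (W a) \<Longrightarrow> rho a x = 0"
  unfolding rho_def using in_closure_iff_infdist_zero[of "W a" x] subspace_0[OF W_sub] by auto

lemma rho_bdd: "bdd_above (range (\<lambda>a. rho a x))"
  using rho_le by (intro bdd_aboveI2) 

lemma Srho_ge: "rho a x \<le> Srho x"
  unfolding Srho_def using rho_bdd by (intro cSUP_upper) auto

lemma Srho_le: "(\<And>a. rho a x \<le> B) \<Longrightarrow> Srho x \<le> B"
  unfolding Srho_def by (intro cSUP_least) auto

lemma Srho_nonneg: "0 \<le> Srho x" using Srho_ge[of undefined x] rho_nonneg[of undefined x] by linarith

lemma Srho_add: "Srho (x + y) \<le> Srho x + Srho y"
  by (rule Srho_le) (meson Srho_ge add_mono order_trans rho_add)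

lemma Srho_scale_le: "Srho (c *\<^sub>R x) \<le> \<bar>c\<bar> * Srho x"
  by (rule Srho_le) (simp add: rho_scale Srho_ge mult_left_mono)

lemma Srho_scale: "Srho (c *\<^sub>R x) = \<bar>c\<bar> * Srho x"
proof (cases "c = 0")
  case True
  then show ?thesis using Srho_scale_le[of 0 x] Srho_nonneg[of 0] by simp
next
  case False
  have "Srho x = Srho (inverse c *\<^sub>R (c *\<^sub>R x))" using False by simp
  also have "\<dots> \<le> \<bar>inverse c\<bar> * Srho (c *\<^sub>R x)" by (rule Srho_scale_le)
  finally have "\<bar>c\<bar> * Srho x \<le> Srho (c *\<^sub>R x)" using False
    by (simp add: field_simps abs_inverse divide_le_eq)
  then show ?thesis using Srho_scale_le by (meson antisym)
qed

lemma Srho_le_norm: "Srho x \<le> norm x / \<delta>"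
  by (rule Srho_le) (rule rho_le)

lemma N_nonneg: "0 \<le> N x" unfolding N_def using Srho_nonneg[of x] by (simp add: le_max_iff_disj)

lemma N_add: "N (x + y) \<le> N x + N y"
  unfolding N_def using infdist_add_le[OF subspace_Y, of x y] Srho_add[of x y]
  by (simp add: max_def)

lemma N_scale: "N (c *\<^sub>R x) = \<bar>c\<bar> * N x"
  unfolding N_def using infdist_scale[OF subspace_Y] Srho_scale by (simp add: max_mult_distrib_left)  

lemma N_upper: "N x \<le> (1 + 1/\<delta>) * norm x"
proof -
  have "infdist x Y \<le> norm x" by (rule infdist_le_norm[OF subspace_Y])
  moreover have "Srho x \<le> norm x / \<delta>" by (rule Srho_le_norm)
  moreover have "0 \<le> norm x / \<delta>" "0 \<le> norm x" using dpos by auto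
  moreover have "(1 + 1/\<delta>) * norm x = norm x + norm x / \<delta>" by (simp add: algebra_simps)
  ultimately show ?thesis unfolding N_def by (simp only:)
qed

lemma N_lower_aux: "\<epsilon> > 0 \<Longrightarrow> norm x \<le> (1 + M + M/\<delta>) * N x + \<epsilon> * (1 + M/\<delta>)"
proof -
  assume \<epsilon>: "\<epsilon> > 0"
  let ?d = "infdist x Y"
  obtain u where u: "u \<in> Y" "dist x u < ?d + \<epsilon>"
    using infdist_lessE[of Y x "?d + \<epsilon>"] subspace_0[OF subspace_Y] \<epsilon> by force
  obtain f where f: "f \<in> c0" "u = T f" using u unfolding Y_def by auto
  have sup: "supnorm f \<le> Srho x + (?d + \<epsilon>)/\<delta>"
  proof (rule supnorm_le)
    fix a
    have "\<bar>f a\<bar> = rho a (x + (u - x))" using rho_T[OF f(1)] f(2) by simp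
    also have "\<dots> \<le> rho a x + rho a (u - x)" by (rule rho_add)
    also have "\<dots> \<le> Srho x + norm (u - x) / \<delta>" using Srho_ge rho_le by (meson add_mono)
    also have "\<dots> \<le> Srho x + (?d + \<epsilon>)/\<delta>" using u(2) dpos
      by (simp add: dist_norm norm_minus_commute divide_right_mono)
    finally show "\<bar>f a\<bar> \<le> Srho x + (?d + \<epsilon>)/\<delta>" .
  qed
  have "norm x \<le> norm (x - u) + norm u" using norm_triangle_ineq[of "x - u" u] by simp
  also have "\<dots> \<le> (?d + \<epsilon>) + M * supnorm f" using u(2) T_bnd f by (simp add: dist_norm less_imp_le add_mono)
  also have "\<dots> \<le> (?d + \<epsilon>) + M * (Srho x + (?d + \<epsilon>)/\<delta>)" using sup M_pos by simp
  also have "\<dots> = ?d + M * Srho x + (M/\<delta>) * ?d + \<epsilon> * (1 + M/\<delta>)" by (simp add: algebra_simps add_divide_distrib)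
  also have "\<dots> \<le> N x + M * N x + (M/\<delta>) * N x + \<epsilon> * (1 + M/\<delta>)"
    unfolding N_def using M_pos dpos \<epsilon> by (intro add_mono mult_left_mono) auto
  finally show "norm x \<le> (1 + M + M/\<delta>) * N x + \<epsilon> * (1 + M/\<delta>)" by (simp add: algebra_simps)
qed

lemma N_lower: "norm x \<le> (1 + M + M/\<delta>) * N x"
proof (rule field_le_epsilon)
  fix \<epsilon> :: real assume \<epsilon>: "\<epsilon> > 0"
  have C: "0 < 1 + M/\<delta>" using M_pos dpos by (simp add: add_pos_nonneg)
  have "norm x \<le> (1 + M + M/\<delta>) * N x + (\<epsilon> / (1 + M/\<delta>)) * (1 + M/\<delta>)"
    using N_lower_aux[of "\<epsilon> / (1 + M/\<delta>)"] \<epsilon> C by simp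
  then show "norm x \<le> (1 + M + M/\<delta>) * N x + \<epsilon>" using C by simp
qed


lemma N_e: "N (e a) = 1"
proof -
  have "Srho (e a) \<le> 1"
    by (rule Srho_le) (metis order_refl rho_e_other rho_e_self zero_le_one)
  moreover have "1 \<le> Srho (e a)" using Srho_ge[of a "e a"] rho_e_self by simp
  ultimately show ?thesis unfolding N_def using e_Y by simp
qed

lemma N_pm: assumes x: "x \<in> closure (W a)" "N x \<le> 1" and c: "\<bar>c\<bar> = 1"
  shows "N (x + c *\<^sub>R e a) \<le> 1"
proof -
  have "infdist (x + c *\<^sub>R e a) Y \<le> infdist x Y + infdist (c *\<^sub>R e a) Y"
    by (rule infdist_add_le[OF subspace_Y])
  also have "infdist (c *\<^sub>R e a) Y = 0" using infdist_scale[OF subspace_Y, of c "e a"] e_Y by simp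
  finally have 1: "infdist (x + c *\<^sub>R e a) Y \<le> 1" using x(2) unfolding N_def by simp
  have "Srho (x + c *\<^sub>R e a) \<le> 1"
  proof (rule Srho_le)
    fix b
    have "rho b (x + c *\<^sub>R e a) \<le> rho b x + rho b (c *\<^sub>R e a)" by (rule rho_add)
    also have "\<dots> = rho b x + rho b (e a)" using rho_scale c by simp
    also have "\<dots> \<le> 1"
    proof (cases "b = a")
      case True then show ?thesis using rho_closure[OF x(1)] rho_e_self by simp
    next
      case False
      then have "rho b (e a) = 0" using rho_e_other by metis
      moreover have "rho b x \<le> 1" using Srho_ge[of b x] x(2) unfolding N_def by simp
      ultimately show ?thesis by simp
    qed
    finally show "rho b (x + c *\<^sub>R e a) \<le> 1" .
  qed
  with 1 show ?thesis unfolding N_def by simp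
qed

lemma N_equiv: "equiv_norm N"
  unfolding equiv_norm_def
proof (intro conjI allI)
  fix x
  show "0 \<le> N x" by (rule N_nonneg)
  have K: "0 < 1 + M + M/\<delta>" using M_pos dpos by (simp add: add_pos_pos)
  show "N x = 0 \<longleftrightarrow> x = 0"
  proof
    assume "N x = 0" then show "x = 0" using N_lower[of x] by simp
  next
    assume "x = 0" then show "N x = 0" using N_scale[of 0 0] by simp
  qed
next
  fix x y show "N (x + y) \<le> N x + N y" by (rule N_add)
next
  fix a x show "N (a *\<^sub>R x) = \<bar>a\<bar> * N x" by (rule N_scale)
next
  have K: "0 < 1 + M + M/\<delta>" using M_pos dpos by (simp add: add_pos_pos)
  show "\<exists>m M. 0 < m \<and> (\<forall>x. m * norm x \<le> N x \<and> N x \<le> M * norm x)"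
  proof (intro exI conjI allI)
    show "0 < 1 / (1 + M + M/\<delta>)" using K by simp
    fix x
    show "1 / (1 + M + M/\<delta>) * norm x \<le> N x" using N_lower[of x] K by (simp add: field_simps)
    show "N x \<le> (1 + 1/\<delta>) * norm x" by (rule N_upper)
  qed
qed

end

context includes cardinal_syntax begin

fun Qn :: "'a::real_normed_vector set \<Rightarrow> nat \<Rightarrow> 'a set" where
  "Qn S 0 = {0}"
| "Qn S (Suc n) = (\<lambda>(q, v, d). of_rat q *\<^sub>R v + d) ` ((UNIV :: rat set) \<times> S \<times> Qn S n)"

definition Dq :: "'a::real_normed_vector set \<Rightarrow> 'a set" where "Dq S = (\<Union>n. Qn S n)"

lemma countable_le_inf: assumes "Card_order \<rho>" "\<not> finite (Field \<rho>)" "countable A"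
  shows "|A| \<le>o \<rho>"
proof -
  have "|A| \<le>o natLeq" using assms(3) countable_card_le_natLeq by blast
  moreover have "natLeq \<le>o |Field \<rho>|" using assms(2) infinite_iff_natLeq_ordLeq by blast
  moreover have "|Field \<rho>| =o \<rho>" using assms(1) card_of_Field_ordIso by blast
  ultimately show ?thesis using ordLeq_transitive ordLeq_ordIso_trans by blast
qed

lemma Qn_card: assumes "Card_order \<rho>" "\<not> finite (Field \<rho>)" "|S| \<le>o \<rho>"
  shows "|Qn S n| \<le>o \<rho>"
proof (induction n)
  case 0 then show ?case using countable_le_inf[OF assms(1,2), of "Qn S 0"] by simp
next
  case (Suc n)
  have r: "|UNIV :: rat set| \<le>o \<rho>" using countable_le_inf[OF assms(1,2) countableI_type] .
  have "|S \<times> Qn S n| \<le>o \<rho>" using card_of_Times_ordLeq_infinite_Field[OF assms(2) assms(3) Suc assms(1)] .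
  then have "|(UNIV :: rat set) \<times> S \<times> Qn S n| \<le>o \<rho>"
    using card_of_Times_ordLeq_infinite_Field[OF assms(2) r _ assms(1)] by blast
  then show ?case using card_of_image ordLeq_transitive by (simp only: Qn.simps) blast
qed

lemma Dq_card: assumes "Card_order \<rho>" "\<not> finite (Field \<rho>)" "|S| \<le>o \<rho>"
  shows "|Dq S| \<le>o \<rho>"
  unfolding Dq_def
  by (rule card_of_UNION_ordLeq_infinite_Field[OF assms(2,1)])
     (auto intro: countable_le_inf[OF assms(1,2)] Qn_card[OF assms])

lemma Dq_approx_sum: assumes "finite t" "t \<subseteq> S" "\<epsilon> > 0"
  shows "\<exists>d\<in>Dq S. norm ((\<Sum>v\<in>t. c v *\<^sub>R v) - d) < \<epsilon>"
  using assms
proof (induction t arbitrary: \<epsilon> rule: finite_induct)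
  case empty
  have "(0::'a) \<in> Dq S" unfolding Dq_def using Qn.simps(1) by blast
  then show ?case using empty by force
next
  case (insert v t)
  obtain d where d: "d \<in> Dq S" "norm ((\<Sum>v\<in>t. c v *\<^sub>R v) - d) < \<epsilon>/2"
    using insert by (meson half_gt_zero insert_subset)
  obtain n where n: "d \<in> Qn S n" using d(1) unfolding Dq_def by blast
  have "0 < 2 * (norm v + 1)" by (smt (verit) norm_ge_zero)
  then have pos: "0 < \<epsilon> / (2 * (norm v + 1))" using insert(5) by (rule divide_pos_pos[rotated])
  obtain x where x: "x \<in> \<rat>" "c v - \<epsilon> / (2 * (norm v + 1)) < x" "x < c v + \<epsilon> / (2 * (norm v + 1))"
    using Rats_dense_in_real[of "c v - \<epsilon> / (2 * (norm v + 1))" "c v + \<epsilon> / (2 * (norm v + 1))"] pos by auto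
  obtain q where q: "x = of_rat q" using x(1) Rats_cases by blast
  have "of_rat q *\<^sub>R v + d \<in> Qn S (Suc n)" using n insert(4) by (auto intro!: image_eqI[of _ _ "(q, v, d)"])
  then have mem: "of_rat q *\<^sub>R v + d \<in> Dq S" unfolding Dq_def by blast
  have "norm ((c v - of_rat q) *\<^sub>R v) = \<bar>c v - x\<bar> * norm v" using q by simp
  also have "\<dots> \<le> \<epsilon> / (2 * (norm v + 1)) * norm v" using x by (intro mult_right_mono) auto
  also have "\<dots> \<le> \<epsilon> / 2"
  proof -
    have e1: "\<epsilon> / (2 * (norm v + 1)) * norm v = (\<epsilon>/2) * (norm v / (norm v + 1))" by (simp add: field_simps)
    have h: "0 < norm v + 1" by (smt (verit) norm_ge_zero)
    then have "norm v / (norm v + 1) \<le> 1" by (simp add: divide_le_eq_1)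
    then have "(\<epsilon>/2) * (norm v / (norm v + 1)) \<le> (\<epsilon>/2) * 1" using insert(5) by (intro mult_left_mono) auto
    then show ?thesis using e1 by simp
  qed
  finally have a: "norm ((c v - of_rat q) *\<^sub>R v) \<le> \<epsilon>/2" .
  have "(\<Sum>v\<in>insert v t. c v *\<^sub>R v) - (of_rat q *\<^sub>R v + d) = (c v - of_rat q) *\<^sub>R v + ((\<Sum>v\<in>t. c v *\<^sub>R v) - d)"
    using insert(1,2) by (simp add: algebra_simps)
  then have "norm ((\<Sum>v\<in>insert v t. c v *\<^sub>R v) - (of_rat q *\<^sub>R v + d)) \<le> norm ((c v - of_rat q) *\<^sub>R v) + norm ((\<Sum>v\<in>t. c v *\<^sub>R v) - d)"
    by (metis norm_triangle_ineq)
  also have "\<dots> < \<epsilon>" using a d(2) by simp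
  finally show ?case using mem by blast
qed

lemma Dq_approx: assumes "y \<in> span S" "\<epsilon> > 0" shows "\<exists>d\<in>Dq S. norm (y - d) < \<epsilon>"
proof -
  obtain t c where "finite t" "t \<subseteq> S" "y = (\<Sum>v\<in>t. c v *\<^sub>R v)"
    using assms(1) unfolding real_vector.span_explicit by blast
  then show ?thesis using Dq_approx_sum assms(2) by blast
qed

end

locale full = emb T m M for T :: "('k \<Rightarrow> real) \<Rightarrow> 'a::real_normed_vector" and m M +
  fixes r :: "'k rel" and g :: "'k \<Rightarrow> 'a"
  assumes r: "card_order r" and ucf: "uncountable_cf r"
begin

unbundle cardinal_syntax

definition G :: "'k \<Rightarrow> 'a set" where "G \<gamma> = g ` underS r \<gamma>"
definition good :: "'k \<Rightarrow> 'k \<Rightarrow> bool" where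
  "good a \<gamma> \<longleftrightarrow> m/8 \<le> infdist (e a) (span (G \<gamma> \<union> Y0 a))"
definition U :: "'k \<Rightarrow> 'a set" where "U a = \<Union> (G ` {\<gamma>. good a \<gamma>})"
definition W :: "'k \<Rightarrow> 'a set" where "W a = span (U a \<union> Y0 a)"

lemma wo: "well_order_on UNIV r" using r card_order_on_well_order_on by blast

lemma r_refl: "(x, x) \<in> r"
  using wo unfolding well_order_on_def linear_order_on_def partial_order_on_def preorder_on_def refl_on_def by blast

lemma r_total: "(x, y) \<in> r \<or> (y, x) \<in> r"
  using wo r_refl unfolding well_order_on_def linear_order_on_def total_on_def by (cases "x = y") auto

lemma r_trans: "(x, y) \<in> r \<Longrightarrow> (y, z) \<in> r \<Longrightarrow> (x, z) \<in> r"
  using wo unfolding well_order_on_def linear_order_on_def partial_order_on_def preorder_on_def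
  by (meson transD)

lemma r_antisym: "(x, y) \<in> r \<Longrightarrow> (y, x) \<in> r \<Longrightarrow> x = y"
  using wo unfolding well_order_on_def linear_order_on_def partial_order_on_def
  by (meson antisymD)

lemma underS_mono: "(\<gamma>1, \<gamma>2) \<in> r \<Longrightarrow> underS r \<gamma>1 \<subseteq> underS r \<gamma>2"
  unfolding underS_def using r_trans r_antisym by blast

lemma G_mono: "(\<gamma>1, \<gamma>2) \<in> r \<Longrightarrow> G \<gamma>1 \<subseteq> G \<gamma>2"
  unfolding G_def using underS_mono by (meson image_mono)

lemma unc: "\<not> countable (UNIV :: 'k set)"
  using ucf r_refl unfolding uncountable_cf_def cofinal_in_def by blast

lemma chain: "finite t \<Longrightarrow> t \<subseteq> U a \<Longrightarrow> t = {} \<or> (\<exists>\<gamma>. good a \<gamma> \<and> t \<subseteq> G \<gamma>)"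
proof (induction t rule: finite_induct)
  case empty then show ?case by simp
next
  case (insert v t)
  obtain \<gamma>1 where g1: "good a \<gamma>1" "v \<in> G \<gamma>1" using insert(4) unfolding U_def by auto
  from insert have "t = {} \<or> (\<exists>\<gamma>. good a \<gamma> \<and> t \<subseteq> G \<gamma>)" by simp
  then show ?case
  proof
    assume "t = {}" then show ?thesis using g1 by auto
  next
    assume "\<exists>\<gamma>. good a \<gamma> \<and> t \<subseteq> G \<gamma>"
    then obtain \<gamma>2 where g2: "good a \<gamma>2" "t \<subseteq> G \<gamma>2" by blast
    show ?thesis
    proof (cases "(\<gamma>1, \<gamma>2) \<in> r")
      case True then show ?thesis using g1 g2 G_mono by blast
    next
      case False then have "(\<gamma>2, \<gamma>1) \<in> r" using r_total by blast
      then show ?thesis using g1 g2 G_mono by blast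
    qed
  qed
qed

lemma W_far: "m/8 \<le> infdist (e a) (W a)"
proof (rule infdist_ge_intro)
  show "W a \<noteq> {}" unfolding W_def using span_zero by blast
next
  fix w assume "w \<in> W a"
  then obtain y z where yz: "w = y + z" "y \<in> span (U a)" "z \<in> span (Y0 a)"
    unfolding W_def span_Un by blast
  have z: "z \<in> Y0 a" using yz(3) subspace_Y0 span_eq_iff by blast
  obtain t c where t: "finite t" "t \<subseteq> U a" "y = (\<Sum>v\<in>t. c v *\<^sub>R v)"
    using yz(2) unfolding real_vector.span_explicit by blast
  from chain[OF t(1,2)] show "m/8 \<le> dist (e a) w"
  proof
    assume "t = {}"
    then have "w = z" using t yz by simp
    then show ?thesis using dist_e_Y0[OF z] m_pos by simp
  next
    assume "\<exists>\<gamma>. good a \<gamma> \<and> t \<subseteq> G \<gamma>"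
    then obtain \<gamma> where g: "good a \<gamma>" "t \<subseteq> G \<gamma>" by blast
    have "y \<in> span (G \<gamma> \<union> Y0 a)" unfolding t(3)
      using g(2) by (intro span_sum span_scale span_base) auto
    moreover have "z \<in> span (G \<gamma> \<union> Y0 a)" using z by (intro span_base) auto
    ultimately have "w \<in> span (G \<gamma> \<union> Y0 a)" using yz(1) span_add by blast
    then have "infdist (e a) (span (G \<gamma> \<union> Y0 a)) \<le> dist (e a) w" by (rule infdist_le)
    then show ?thesis using g(1) unfolding good_def by simp
  qed
qed

lemma W_sub: "subspace (W a)" unfolding W_def by simp
lemma Y0_W: "Y0 a \<subseteq> W a" unfolding W_def using span_superset[of "U a \<union> Y0 a"] by blast

lemma G_small: "|G \<gamma>| <o |UNIV :: 'k set|"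
proof -
  have co: "card_order_on UNIV r" using r .
  then have C: "Card_order r" and F: "Field r = UNIV" using card_order_on_Card_order by blast+
  have "|underS r \<gamma>| <o r" using card_of_underS[OF C] F by simp
  moreover have "r =o |UNIV :: 'k set|" using card_of_unique[OF co] .
  moreover have "|G \<gamma>| \<le>o |underS r \<gamma>|" unfolding G_def by (rule card_of_image)
  ultimately show ?thesis using ordLeq_ordLess_trans ordLess_ordIso_trans by blast
qed

lemma exists_good: "\<exists>a. good a \<gamma>"
proof (rule ccontr)
  assume "\<nexists>a. good a \<gamma>"
  then have nb: "\<not> good a \<gamma>" for a by blast
  have bad: "infdist (e a) (span (G \<gamma> \<union> Y0 a)) < m/8" for a using nb[of a] unfolding good_def by linarith
  let ?Gs = "G \<gamma>"
  have "\<exists>p. fst p \<in> Dq ?Gs \<and> snd p \<in> c0 \<and> snd p a = 0 \<and> norm (e a - T (snd p) - fst p) < m/4" for a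
  proof -
    obtain w where w: "w \<in> span (?Gs \<union> Y0 a)" "dist (e a) w < m/8"
      using infdist_lessE[OF _ bad[of a]] span_zero by blast
    then obtain y z where yz: "w = y + z" "y \<in> span ?Gs" "z \<in> span (Y0 a)"
      unfolding span_Un by blast
    have "z \<in> Y0 a" using yz(3) subspace_Y0 span_eq_iff by blast
    then obtain h where h: "h \<in> c0" "h a = 0" "z = T h" unfolding Y0_def by auto
    obtain d where d: "d \<in> Dq ?Gs" "norm (y - d) < m/8" using Dq_approx[OF yz(2), of "m/8"] m_pos by auto
    have "e a - T h - d = (e a - w) + (y - d)" using yz(1) h(3) by (simp add: algebra_simps)
    then have "norm (e a - T h - d) \<le> norm (e a - w) + norm (y - d)" by (metis norm_triangle_ineq)
    also have "\<dots> < m/4" using w(2) d(2) by (simp add: dist_norm)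
    finally show ?thesis using d h by (intro exI[of _ "(d, h)"]) simp
  qed
  then obtain P where P: "\<And>a. fst (P a) \<in> Dq ?Gs \<and> snd (P a) \<in> c0 \<and> snd (P a) a = 0 \<and> norm (e a - T (snd (P a)) - fst (P a)) < m/4"
    by metis
  define \<phi> where "\<phi> a = fst (P a)" for a
  define H where "H a = snd (P a)" for a
  have \<phi>D: "\<phi> a \<in> Dq ?Gs" and Hc: "H a \<in> c0" and Ha: "H a a = 0" and Hn: "norm (e a - T (H a) - \<phi> a) < m/4" for a
    using P unfolding \<phi>_def H_def by auto
  have fib: "finite {a. \<phi> a = d}" for d
  proof (cases "{a. \<phi> a = d} = {}")
    case True then show ?thesis by simp
  next
    case False
    then obtain a0 where a0: "\<phi> a0 = d" by auto
    define v0 where "v0 = (\<lambda>k. dl a0 k - H a0 k)"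
    have v0c: "v0 \<in> c0" unfolding v0_def by (rule c0_diff[OF dl_c0 Hc])
    have Tv0: "T v0 = e a0 - T (H a0)" unfolding v0_def e_def by (rule T_diff[OF dl_c0 Hc])
    have "{a. \<phi> a = d} \<subseteq> {k. 1/2 \<le> \<bar>v0 k\<bar>}"
    proof
      fix b assume "b \<in> {a. \<phi> a = d}"
      then have b: "\<phi> b = d" by simp
      define vb where "vb = (\<lambda>k. dl b k - H b k)"
      have vbc: "vb \<in> c0" unfolding vb_def by (rule c0_diff[OF dl_c0 Hc])
      have Tvb: "T vb = e b - T (H b)" unfolding vb_def e_def by (rule T_diff[OF dl_c0 Hc])
      have "T vb - T v0 = (e b - T (H b) - d) - (e a0 - T (H a0) - d)" using Tvb Tv0 by simp
      then have "norm (T vb - T v0) \<le> norm (e b - T (H b) - d) + norm (e a0 - T (H a0) - d)"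
        by (metis norm_triangle_ineq4)
      also have "\<dots> < m/2" using Hn[of b] Hn[of a0] b a0 by simp
      finally have n: "norm (T (\<lambda>k. vb k - v0 k)) < m/2" using T_diff[OF vbc v0c] by simp
      have "m * \<bar>vb b - v0 b\<bar> \<le> norm (T (\<lambda>k. vb k - v0 k))" using T_lower[OF c0_diff[OF vbc v0c]] by simp
      with n have "m * \<bar>vb b - v0 b\<bar> < m * (1/2)" by simp
      then have "\<bar>vb b - v0 b\<bar> < 1/2" using m_pos by (simp only: mult_less_cancel_left_pos)
      moreover have "vb b = 1" unfolding vb_def dl_def using Ha[of b] by simp
      ultimately have "\<bar>1 - v0 b\<bar> < 1/2" by simp
      then show "b \<in> {k. 1/2 \<le> \<bar>v0 k\<bar>}" by (simp only: mem_Collect_eq)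
    qed
    moreover have "finite {k. 1/2 \<le> \<bar>v0 k\<bar>}"
    proof -
      have "\<forall>e>0. finite {k. e \<le> \<bar>v0 k\<bar>}" using v0c unfolding c0_def by simp
      then show ?thesis by (rule allE[of _ "1/2"]) simp
    qed
    ultimately show ?thesis by (rule finite_subset)
  qed
  have UN: "(UNIV :: 'k set) = (\<Union>d \<in> \<phi> ` UNIV. {a. \<phi> a = d})" by auto
  have contra: False if C: "Card_order \<rho>" and I: "\<not> finite (Field \<rho>)" and S: "|?Gs| \<le>o \<rho>"
    and L: "\<rho> <o |UNIV :: 'k set|" for \<rho> :: "'b rel"
  proof -
    have "|\<phi> ` UNIV| \<le>o |Dq ?Gs|" using \<phi>D by (intro card_of_mono1) auto
    then have "|\<phi> ` UNIV| \<le>o \<rho>" using Dq_card[OF C I S] ordLeq_transitive by blast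
    moreover have "\<forall>d \<in> \<phi> ` UNIV. |{a. \<phi> a = d}| \<le>o \<rho>"
      using countable_le_inf[OF C I] fib countable_finite by blast
    ultimately have "|\<Union>d \<in> \<phi> ` UNIV. {a. \<phi> a = d}| \<le>o \<rho>"
      by (rule card_of_UNION_ordLeq_infinite_Field[OF I C])
    then have "|UNIV :: 'k set| \<le>o \<rho>" using UN by simp
    then show False using L not_ordLess_ordLeq by blast
  qed
  show False
  proof (cases "finite ?Gs")
    case True
    have S: "|?Gs| \<le>o natLeq" using countable_card_le_natLeq[THEN iffD1, OF countable_finite[OF True]] .
    have "\<not> |UNIV :: 'k set| \<le>o natLeq" using unc countable_card_le_natLeq[of "UNIV :: 'k set"] by simp
    then have L: "natLeq <o |UNIV :: 'k set|"
      using not_ordLeq_iff_ordLess[OF natLeq_Well_order card_of_Well_order[of "UNIV :: 'k set"]] by blast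
    have I: "\<not> finite (Field natLeq)" by (simp add: Field_natLeq)
    show False by (rule contra[OF natLeq_Card_order I S L])
  next
    case False
    have I: "\<not> finite (Field |?Gs| )" using False by (simp add: Field_card_of)
    have S: "|?Gs| \<le>o |?Gs|" by (rule card_of_mono1) simp
    show False by (rule contra[OF card_of_Card_order I S G_small])
  qed
qed

sublocale np: normpart T m M W "m/8"
proof unfold_locales
  show "subspace (W a)" for a by (rule W_sub)
  show "Y0 a \<subseteq> W a" for a by (rule Y0_W)
  show "0 < m/8" using m_pos by simp
  show "m/8 \<le> infdist (e a) (W a)" for a by (rule W_far)
qed

lemma SQ: assumes dense: "closure (range g) = UNIV" shows "SQ_less_cf np.N r"
  unfolding SQ_less_cf_def
proof (intro allI impI)
  fix A assume A: "A \<subseteq> {x. np.N x = 1}" and cA: "card_less_cf A r"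
  have "\<exists>\<gamma>. x \<in> closure (G \<gamma>)" for x
  proof -
    have "x \<in> closure (range g)" using dense by simp
    then obtain s where s: "\<forall>n. s n \<in> range g" "s \<longlonglongrightarrow> x" unfolding closure_sequential by blast
    have "\<forall>n. \<exists>b. s n = g b" using s(1) by blast
    then obtain \<beta> where \<beta>: "\<And>n. s n = g (\<beta> n)" by metis
    have "countable (range \<beta>)" by simp
    then have "\<not> cofinal_in r (range \<beta>)" using ucf unfolding uncountable_cf_def by blast
    then obtain k where k: "\<forall>c\<in>range \<beta>. (k, c) \<notin> r" unfolding cofinal_in_def by blast
    have "\<beta> n \<in> underS r k" for n
    proof -
      have nk: "(k, \<beta> n) \<notin> r" using k by blast
      then have "(\<beta> n, k) \<in> r" using r_total by blast
      moreover have "\<beta> n \<noteq> k" using nk r_refl by blast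
      ultimately show ?thesis unfolding underS_def by blast
    qed
    then have "\<forall>n. s n \<in> G k" unfolding G_def using \<beta> by blast
    then have "x \<in> closure (G k)" using s(2) unfolding closure_sequential by blast
    then show ?thesis by blast
  qed
  then obtain \<gamma>f where \<gamma>f: "\<And>x. x \<in> closure (G (\<gamma>f x))" by metis
  have "\<not> cofinal_in r (\<gamma>f ` A)"
  proof
    assume "cofinal_in r (\<gamma>f ` A)"
    then have "|A| <o |\<gamma>f ` A|" using cA unfolding card_less_cf_def by blast
    then show False using card_of_image[of \<gamma>f A] not_ordLess_ordLeq by blast
  qed
  then obtain k where k: "\<forall>c\<in>\<gamma>f ` A. (k, c) \<notin> r" unfolding cofinal_in_def by blast
  obtain a where a: "good a k" using exists_good by blast
  have "G k \<subseteq> U a" unfolding U_def using a by blast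
  then have GW: "G k \<subseteq> W a" unfolding W_def using span_superset[of "U a \<union> Y0 a"] by blast
  have clos: "x \<in> closure (W a)" if x: "x \<in> A" for x
  proof -
    have "(k, \<gamma>f x) \<notin> r" using k x by blast
    then have "(\<gamma>f x, k) \<in> r" using r_total[of k "\<gamma>f x"] by blast
    then have "G (\<gamma>f x) \<subseteq> W a" using G_mono GW by blast
    then have "closure (G (\<gamma>f x)) \<subseteq> closure (W a)" by (rule closure_mono)
    then show ?thesis using \<gamma>f[of x] by blast
  qed
  show "\<exists>y. np.N y = 1 \<and> (\<forall>x\<in>A. np.N (x + y) \<le> 1 \<and> np.N (x - y) \<le> 1)"
  proof (intro exI conjI ballI)
    show "np.N (e a) = 1" by (rule np.N_e)
    fix x assume x: "x \<in> A"
    then have N1: "np.N x \<le> 1" using A by auto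
    show "np.N (x + e a) \<le> 1" using np.N_pm[OF clos[OF x] N1, of 1] by simp
    show "np.N (x - e a) \<le> 1" using np.N_pm[OF clos[OF x] N1, of "-1"] by simp
  qed
qed

end

theorem theorem3p7:
  fixes r :: "'k rel"
  assumes "card_order r"
    and "infinite (UNIV :: 'k set)"
    and "uncountable_cf r"
    and "density_char_eq TYPE('a::banach) (UNIV :: 'k set)"
    and "contains_c0 TYPE('a) (UNIV :: 'k set)"
  shows "\<exists>N :: 'a \<Rightarrow> real. equiv_norm N \<and> SQ_less_cf N r"
proof -
  obtain T :: "('k \<Rightarrow> real) \<Rightarrow> 'a" and m M where c: "0 < m"
    "\<forall>f\<in>c0. \<forall>g\<in>c0. T (\<lambda>k. f k + g k) = T f + T g"
    "\<forall>f\<in>c0. \<forall>a. T (\<lambda>k. a * f k) = a *\<^sub>R T f"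
    "\<forall>f\<in>c0. m * supnorm f \<le> norm (T f) \<and> norm (T f) \<le> M * supnorm f"
    using assms(5) unfolding contains_c0_def by blast
  obtain D :: "'a set" where D: "closure D = UNIV" "ordIso2 (card_of D) (card_of (UNIV :: 'k set))"
    using assms(4) unfolding density_char_eq_def by blast
  have "ordIso2 (card_of (UNIV :: 'k set)) (card_of D)" using D(2) ordIso_symmetric by blast
  then obtain g :: "'k \<Rightarrow> 'a" where g: "bij_betw g UNIV D" using card_of_ordIso by blast
  then have rg: "range g = D" by (simp add: bij_betw_def)
  interpret F: full T m M r g
    by unfold_locales (use c assms(1,3) in auto)
  have "equiv_norm F.np.N" by (rule F.np.N_equiv)
  moreover have "SQ_less_cf F.np.N r" using F.SQ D(1) rg by simp
  ultimately show ?thesis by blast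
qed

end
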